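(* Let $G$ be a finite undirected weighted graph on $V=\{1,\dots,n\}$ with symmetric nonnegative weights $w(ij)=w(ji)\ge 0$, degrees $d_i=\sum_{j=1}^n w(ij)$ with $\mathrm{vol}(V)=\sum_i d_i>0$, and a positive vertex measure $\mu_1,\dots,\mu_n>0$. Let $M$ be the normalized modularity matrix $M_{ij}=\frac{1}{\mu_i}\big(w(ij)-\frac{d_id_j}{\mathrm{vol}(V)}\big)$, let $\lambda_1(M)$ be its largest eigenvalue, and let $r_M(x)=\langle x,Mx\rangle_\mu/\|x\|_{2,\mu}^2$ for $x\neq 0$. Assume $\lambda_1(M)>0$. Then: (i) for every $A\subseteq V$, $r_M(\mathbb 1_A-\mathbb 1_{\overline A})=2\,q(A)$; (ii) for every $A\subseteq V$ with $\emptyset\neq A\neq V$, $r_M\big(\mathbb 1_A-\tfrac{\mu(A)}{\mu(V)}\mathbb 1\big)=q_\mu(A)$; (iii) $\max_{x\neq 0,\ \langle x,\mathbb 1\rangle_\mu=0} r_M(x)=\max_{x\neq 0} r_M(x)=\lambda_1(M)$. In this sense $r_M$ is a (linear) relaxation of both $q$ and $q_\mu$.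
   Context: $\langle x,y\rangle_\mu=\sum_i\mu_ix_iy_i$, $\|x\|_{2,\mu}^2=\langle x,x\rangle_\mu$; $M$ is self-adjoint for $\langle\cdot,\cdot\rangle_\mu$, so its eigenvalues are real. $\mathbb 1$ is the all-ones vector, $\mathbb 1_A$ the indicator vector of $A$, $\overline A=V\setminus A$, $\mu(A)=\sum_{i\in A}\mu_i$, $\mathrm{vol}(A)=\sum_{i\in A}d_i$. Modularity of $A$: $Q(A)=\sum_{i,j\in A}w(ij)-\mathrm{vol}(A)^2/\mathrm{vol}(V)$. Modularity set function $q(A)=\frac{2}{\mu(V)}Q(A)$ and normalized modularity $q_\mu(A)=\mu(V)\frac{Q(A)}{\mu(A)\mu(\overline A)}$ (for $\emptyset\ne A\ne V$). *)

theory Defs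
  imports "HOL-Analysis.Analysis"
begin

text \<open>Vertices are the elements of a finite type 'n (standing for V = {1..n}).
  Weights w :: 'n => 'n => real, vertex measure mu :: 'n => real.\<close>

definition deg :: "('n::finite \<Rightarrow> 'n \<Rightarrow> real) \<Rightarrow> 'n \<Rightarrow> real" where
  "deg w i = (\<Sum>j\<in>UNIV. w i j)"

definition vol :: "('n::finite \<Rightarrow> 'n \<Rightarrow> real) \<Rightarrow> 'n set \<Rightarrow> real" where
  "vol w A = (\<Sum>i\<in>A. deg w i)"

definition meas :: "('n::finite \<Rightarrow> real) \<Rightarrow> 'n set \<Rightarrow> real" where
  "meas \<mu> A = (\<Sum>i\<in>A. \<mu> i)"

definition mod_matrix :: "('n::finite \<Rightarrow> 'n \<Rightarrow> real) \<Rightarrow> ('n \<Rightarrow> real) \<Rightarrow> real^'n^'n" where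
  "mod_matrix w \<mu> = (\<chi> i j. (w i j - deg w i * deg w j / vol w UNIV) / \<mu> i)"

definition inner_mu :: "('n::finite \<Rightarrow> real) \<Rightarrow> real^'n \<Rightarrow> real^'n \<Rightarrow> real" where
  "inner_mu \<mu> x y = (\<Sum>i\<in>UNIV. \<mu> i * x$i * y$i)"

definition rayleigh :: "real^'n^'n \<Rightarrow> ('n::finite \<Rightarrow> real) \<Rightarrow> real^'n \<Rightarrow> real" where
  "rayleigh M \<mu> x = inner_mu \<mu> x (M *v x) / inner_mu \<mu> x x"

text \<open>Eigenvalues of a real square matrix (M is mu-self-adjoint, so all its eigenvalues are real).\<close>
definition eigenvalues :: "real^'n^'n \<Rightarrow> real set" where
  "eigenvalues M = {l. \<exists>x. x \<noteq> 0 \<and> M *v x = l *\<^sub>R x}"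

definition largest_eigenvalue :: "real^'n^'n \<Rightarrow> real" where
  "largest_eigenvalue M = Max (eigenvalues M)"

definition indic_vec :: "'n::finite set \<Rightarrow> real^'n" where
  "indic_vec A = (\<chi> i. if i \<in> A then 1 else 0)"

definition modularity :: "('n::finite \<Rightarrow> 'n \<Rightarrow> real) \<Rightarrow> 'n set \<Rightarrow> real" where
  "modularity w A = (\<Sum>i\<in>A. \<Sum>j\<in>A. w i j) - (vol w A)\<^sup>2 / vol w UNIV"

definition modq :: "('n::finite \<Rightarrow> 'n \<Rightarrow> real) \<Rightarrow> ('n \<Rightarrow> real) \<Rightarrow> 'n set \<Rightarrow> real" where
  "modq w \<mu> A = 2 / meas \<mu> UNIV * modularity w A"

definition modq_mu :: "('n::finite \<Rightarrow> 'n \<Rightarrow> real) \<Rightarrow> ('n \<Rightarrow> real) \<Rightarrow> 'n set \<Rightarrow> real" where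
  "modq_mu w \<mu> A = meas \<mu> UNIV * modularity w A / (meas \<mu> A * meas \<mu> (UNIV - A))"

end

theory Submission
  imports Defs
begin

lemma inner_mu_M:
  fixes M :: "real^'n::finite^'n"
  shows "inner_mu \<mu> x (M *v y) = (\<Sum>i\<in>UNIV. \<Sum>j\<in>UNIV. \<mu> i * M$i$j * x$i * y$j)"
  unfolding inner_mu_def matrix_vector_mult_def
  by (simp add: sum_distrib_left mult.assoc mult.left_commute)

lemma inner_mu_sym: "inner_mu \<mu> x y = inner_mu \<mu> y x"
  unfolding inner_mu_def by (simp add: mult.commute mult.left_commute)

lemma selfadj:
  fixes M :: "real^'n::finite^'n"
  assumes sa: "\<And>i j. \<mu> i * M$i$j = \<mu> j * M$j$i"
  shows "inner_mu \<mu> x (M *v y) = inner_mu \<mu> y (M *v x)"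
proof -
  have "inner_mu \<mu> x (M *v y) = (\<Sum>i\<in>UNIV. \<Sum>j\<in>UNIV. \<mu> j * M$j$i * x$i * y$j)"
    unfolding inner_mu_M using sa by simp
  also have "\<dots> = (\<Sum>j\<in>UNIV. \<Sum>i\<in>UNIV. \<mu> j * M$j$i * x$i * y$j)"
    by (rule sum.swap)
  also have "\<dots> = inner_mu \<mu> y (M *v x)"
    unfolding inner_mu_M by (simp add: mult.commute mult.left_commute)
  finally show ?thesis .
qed

lemma inner_mu_pos:
  assumes mupos: "\<And>i. \<mu> i > 0" and "x \<noteq> 0"
  shows "inner_mu \<mu> x x > 0"
proof -
  from assms(2) obtain k where k: "x$k \<noteq> 0" by (metis vec_eq_iff zero_index)
  have "inner_mu \<mu> x x = (\<Sum>i\<in>UNIV. \<mu> i * (x$i)\<^sup>2)"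
    unfolding inner_mu_def by (simp add: power2_eq_square mult.assoc)
  also have "\<dots> > 0"
  proof (rule sum_pos2[where i=k])
    show "0 < \<mu> k * (x $ k)\<^sup>2" using mupos k by simp
    show "\<And>i. i \<in> UNIV \<Longrightarrow> 0 \<le> \<mu> i * (x $ i)\<^sup>2" using mupos
      by (simp add: less_imp_le)
  qed auto
  finally show ?thesis .
qed

lemma inner_mu_scaleR_left: "inner_mu \<mu> (c *\<^sub>R x) y = c * inner_mu \<mu> x y"
  unfolding inner_mu_def by (simp add: sum_distrib_left mult.commute mult.left_commute)
lemma inner_mu_scaleR_right: "inner_mu \<mu> x (c *\<^sub>R y) = c * inner_mu \<mu> x y"
  unfolding inner_mu_def by (simp add: sum_distrib_left mult.commute mult.left_commute)
lemma inner_mu_add_left: "inner_mu \<mu> (x + z) y = inner_mu \<mu> x y + inner_mu \<mu> z y"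
  unfolding inner_mu_def by (simp add: sum.distrib algebra_simps)
lemma inner_mu_add_right: "inner_mu \<mu> x (y + z) = inner_mu \<mu> x y + inner_mu \<mu> x z"
  unfolding inner_mu_def by (simp add: sum.distrib algebra_simps)

lemma rayleigh_scale:
  fixes M :: "real^'n::finite^'n"
  assumes "c \<noteq> 0"
  shows "rayleigh M \<mu> (c *\<^sub>R x) = rayleigh M \<mu> x"
  using assms unfolding rayleigh_def
  by (simp add: matrix_vector_mult_scaleR inner_mu_scaleR_left inner_mu_scaleR_right)

lemma inner_mu_axis: "inner_mu \<mu> (axis i 1) y = \<mu> i * y$i"
proof -
  have "inner_mu \<mu> (axis i 1) y = (\<Sum>j\<in>UNIV. if j = i then \<mu> j * y$j else 0)"
    unfolding inner_mu_def axis_def by (rule sum.cong) auto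
  thus ?thesis by simp
qed

lemma quad_zero:
  fixes a b :: real
  assumes "\<And>t. 2*t*a + t\<^sup>2*b \<ge> 0" and "b \<ge> 0"
  shows "a = 0"
proof -
  define t where "t = -a/(b+1)"
  have bp: "b + 1 > 0" using assms(2) by simp
  have ta: "t*(b+1) = -a" unfolding t_def using bp by simp
  have "(2*t*a + t\<^sup>2*b)*(b+1)\<^sup>2 = 2*a*(t*(b+1))*(b+1) + (t*(b+1))\<^sup>2*b"
    by (simp add: algebra_simps power2_eq_square)
  also have "\<dots> = -(a\<^sup>2*(b+2))" unfolding ta by (simp add: algebra_simps power2_eq_square)
  finally have eq: "(2*t*a + t\<^sup>2*b)*(b+1)\<^sup>2 = -(a\<^sup>2*(b+2))" .
  have "2*t*a + t\<^sup>2*b \<ge> 0" by (rule assms(1))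
  hence "(2*t*a + t\<^sup>2*b)*(b+1)\<^sup>2 \<ge> 0" by simp
  hence "a\<^sup>2*(b+2) \<le> 0" using eq by simp
  hence "a\<^sup>2 \<le> 0" using assms(2)
    by (metis add_nonneg_pos mult_le_0_iff not_le power2_less_0 zero_less_numeral)
  thus ?thesis by simp
qed

lemma rayleigh_cont:
  fixes M :: "real^'n::finite^'n"
  assumes mupos: "\<And>i. \<mu> i > 0"
  shows "continuous_on (sphere 0 1) (rayleigh M \<mu>)"
proof -
  have "continuous_on (sphere 0 1) (\<lambda>x. inner_mu \<mu> x (M *v x) / inner_mu \<mu> x x)"
  proof (rule continuous_on_divide)
    show "continuous_on (sphere 0 1) (\<lambda>x. inner_mu \<mu> x (M *v x))"
      unfolding inner_mu_def matrix_vector_mult_def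
      by (intro continuous_intros)
    show "continuous_on (sphere 0 1) (\<lambda>x. inner_mu \<mu> x x)"
      unfolding inner_mu_def by (intro continuous_intros)
    show "\<forall>x\<in>sphere 0 1. inner_mu \<mu> x x \<noteq> 0"
    proof
      fix x :: "real^'n" assume "x \<in> sphere 0 1"
      hence "x \<noteq> 0" by auto
      thus "inner_mu \<mu> x x \<noteq> 0" using inner_mu_pos[of \<mu> x] mupos by force
    qed
  qed
  thus ?thesis unfolding rayleigh_def by simp
qed

lemma rayleigh_max:
  fixes M :: "real^'n::finite^'n"
  assumes mupos: "\<And>i. \<mu> i > 0"
    and sa: "\<And>i j. \<mu> i * M$i$j = \<mu> j * M$j$i"
  shows "\<exists>v. v \<noteq> 0 \<and> (\<forall>x. x \<noteq> 0 \<longrightarrow> rayleigh M \<mu> x \<le> rayleigh M \<mu> v)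
           \<and> M *v v = rayleigh M \<mu> v *\<^sub>R v"
proof -
  have ne: "sphere (0::real^'n) 1 \<noteq> {}"
  proof -
    obtain i :: 'n where True by simp
    have "axis i (1::real) \<in> sphere 0 1" by simp
    thus ?thesis by blast
  qed
  obtain v where vS: "v \<in> sphere 0 1" and vmax: "\<And>y. y \<in> sphere 0 1 \<Longrightarrow> rayleigh M \<mu> y \<le> rayleigh M \<mu> v"
  proof -
    have c: "continuous_on (sphere 0 1) (rayleigh M \<mu>)" using rayleigh_cont[of \<mu> M] mupos by blast
    show ?thesis using continuous_attains_sup[OF compact_sphere ne c] that by blast
  qed
  have v0: "v \<noteq> 0" using vS by auto
  define R where "R = rayleigh M \<mu> v"
  have all: "rayleigh M \<mu> x \<le> R" if "x \<noteq> 0" for x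
  proof -
    have "(1/norm x) *\<^sub>R x \<in> sphere 0 1" using that by simp
    hence "rayleigh M \<mu> ((1/norm x) *\<^sub>R x) \<le> R" using vmax R_def by blast
    thus ?thesis using rayleigh_scale[of "1/norm x" M \<mu> x] that by simp
  qed
  define P where "P x = R * inner_mu \<mu> x x - inner_mu \<mu> x (M *v x)" for x
  have Pnn: "P x \<ge> 0" for x
  proof (cases "x = 0")
    case True thus ?thesis unfolding P_def inner_mu_def by simp
  next
    case False
    have pos: "inner_mu \<mu> x x > 0" using inner_mu_pos[of \<mu> x] mupos False by blast
    have "inner_mu \<mu> x (M *v x) / inner_mu \<mu> x x \<le> R" using all[OF False] unfolding rayleigh_def .
    hence "inner_mu \<mu> x (M *v x) \<le> R * inner_mu \<mu> x x" using pos by (simp add: divide_le_eq)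
    thus ?thesis unfolding P_def by simp
  qed
  have vpos: "inner_mu \<mu> v v > 0" using inner_mu_pos[of \<mu> v] mupos v0 by blast
  have Pv: "P v = 0" unfolding P_def R_def rayleigh_def using vpos by simp
  have eig_i: "(M *v v)$i = R * v$i" for i
  proof -
    define y :: "real^'n" where "y = axis i 1"
    define a where "a = R * inner_mu \<mu> y v - inner_mu \<mu> y (M *v v)"
    have sym1: "inner_mu \<mu> v (M *v y) = inner_mu \<mu> y (M *v v)" by (rule selfadj[OF sa])
    have exp: "P (v + t *\<^sub>R y) = P v + 2*t*a + t\<^sup>2 * P y" for t
      unfolding P_def a_def
      by (simp add: matrix_vector_right_distrib matrix_vector_mult_scaleR inner_mu_add_left
          inner_mu_add_right inner_mu_scaleR_left inner_mu_scaleR_right sym1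
          inner_mu_sym[of \<mu> v y] algebra_simps power2_eq_square)
    have "a = 0"
    proof (rule quad_zero)
      show "0 \<le> 2 * t * a + t\<^sup>2 * P y" for t using Pnn[of "v + t *\<^sub>R y"] exp[of t] Pv by simp
      show "0 \<le> P y" by (rule Pnn)
    qed
    hence "\<mu> i * (R * v$i - (M *v v)$i) = 0"
      unfolding a_def y_def inner_mu_axis by (simp add: algebra_simps)
    thus ?thesis using mupos[of i] by simp
  qed
  show ?thesis
    by (rule exI[of _ v]) (use v0 all eig_i in \<open>auto simp: R_def vec_eq_iff\<close>)
qed

lemma eig_orth:
  fixes M :: "real^'n::finite^'n"
  assumes sa: "\<And>i j. \<mu> i * M$i$j = \<mu> j * M$j$i"
    and x: "M *v x = l *\<^sub>R x" and y: "M *v y = k *\<^sub>R y" and lk: "l \<noteq> k"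
  shows "inner_mu \<mu> x y = 0"
proof -
  have "inner_mu \<mu> x (M *v y) = inner_mu \<mu> y (M *v x)" by (rule selfadj[OF sa])
  hence "k * inner_mu \<mu> x y = l * inner_mu \<mu> x y"
    unfolding x y inner_mu_scaleR_right using inner_mu_sym[of \<mu> x y] by simp
  thus ?thesis using lk by simp
qed

lemma finite_eig:
  fixes M :: "real^'n::finite^'n"
  assumes mupos: "\<And>i. \<mu> i > 0"
    and sa: "\<And>i j. \<mu> i * M$i$j = \<mu> j * M$j$i"
  shows "finite (eigenvalues M)"
proof -
  define T :: "real^'n \<Rightarrow> real^'n" where "T x = (\<chi> i. sqrt (\<mu> i) * x$i)" for x
  have Tin: "T x \<bullet> T y = inner_mu \<mu> x y" for x y
    unfolding T_def inner_vec_def inner_mu_def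
  proof (rule sum.cong)
    fix i show "(\<chi> i. sqrt (\<mu> i) * x$i)$i \<bullet> (\<chi> i. sqrt (\<mu> i) * y$i)$i = \<mu> i * x$i * y$i"
      using mupos[of i] by (simp add: algebra_simps)
  qed simp
  define f where "f l = (SOME x. x \<noteq> 0 \<and> M *v x = l *\<^sub>R x)" for l
  have f: "f l \<noteq> 0 \<and> M *v f l = l *\<^sub>R f l" if "l \<in> eigenvalues M" for l
  proof -
    from that obtain x where "x \<noteq> 0 \<and> M *v x = l *\<^sub>R x" unfolding eigenvalues_def by blast
    thus ?thesis unfolding f_def by (rule someI)
  qed
  have fpos: "T (f l) \<bullet> T (f l) > 0" if "l \<in> eigenvalues M" for l
    unfolding Tin using inner_mu_pos[of \<mu> "f l", OF mupos] f[OF that] by blast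
  have forth: "T (f l) \<bullet> T (f k) = 0" if "l \<in> eigenvalues M" "k \<in> eigenvalues M" "l \<noteq> k" for l k
    unfolding Tin using f[OF that(1)] f[OF that(2)] that(3) by (intro eig_orth[OF sa]) auto
  have inj: "inj_on (T \<circ> f) (eigenvalues M)"
  proof (rule inj_onI)
    fix l k assume l: "l \<in> eigenvalues M" and k: "k \<in> eigenvalues M" and eq: "(T \<circ> f) l = (T \<circ> f) k"
    show "l = k"
    proof (rule ccontr)
      assume "l \<noteq> k"
      hence "T (f l) \<bullet> T (f k) = 0" using forth l k by blast
      thus False using fpos[OF l] eq by simp
    qed
  qed
  have "pairwise orthogonal ((T \<circ> f) ` eigenvalues M)"
    unfolding pairwise_def orthogonal_def using forth by fastforce
  moreover have "0 \<notin> (T \<circ> f) ` eigenvalues M" using fpos by fastforce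
  ultimately have "independent ((T \<circ> f) ` eigenvalues M)"
    by (rule pairwise_orthogonal_independent)
  hence "finite ((T \<circ> f) ` eigenvalues M)" using independent_bound by blast
  thus ?thesis using finite_imageD inj by blast
qed

lemma eig_rayleigh:
  fixes M :: "real^'n::finite^'n"
  assumes mupos: "\<And>i. \<mu> i > 0" and "x \<noteq> 0" and "M *v x = l *\<^sub>R x"
  shows "rayleigh M \<mu> x = l"
proof -
  have "inner_mu \<mu> x x > 0" using inner_mu_pos[of \<mu> x, OF mupos assms(2)] .
  thus ?thesis unfolding rayleigh_def assms(3) inner_mu_scaleR_right by simp
qed

lemma largest_eq:
  fixes M :: "real^'n::finite^'n"
  assumes mupos: "\<And>i. \<mu> i > 0"
    and sa: "\<And>i j. \<mu> i * M$i$j = \<mu> j * M$j$i"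
  shows "\<exists>v. v \<noteq> 0 \<and> (\<forall>x. x \<noteq> 0 \<longrightarrow> rayleigh M \<mu> x \<le> largest_eigenvalue M)
           \<and> M *v v = largest_eigenvalue M *\<^sub>R v \<and> rayleigh M \<mu> v = largest_eigenvalue M"
proof -
  from rayleigh_max[of \<mu> M, OF mupos sa] obtain v where v0: "v \<noteq> 0"
    and all: "\<forall>x. x \<noteq> 0 \<longrightarrow> rayleigh M \<mu> x \<le> rayleigh M \<mu> v"
    and ev: "M *v v = rayleigh M \<mu> v *\<^sub>R v"
    by (elim exE conjE)
  have fin: "finite (eigenvalues M)" using finite_eig[of \<mu> M, OF mupos sa] .
  have mem: "rayleigh M \<mu> v \<in> eigenvalues M" unfolding eigenvalues_def
    using v0 ev by (intro CollectI exI[of _ v]) simp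
  have le: "l \<le> rayleigh M \<mu> v" if lE: "l \<in> eigenvalues M" for l
  proof -
    obtain x where x0: "x \<noteq> 0" and xe: "M *v x = l *\<^sub>R x"
      using lE unfolding eigenvalues_def by (elim CollectE exE conjE)
    have "rayleigh M \<mu> x = l" by (rule eig_rayleigh[of \<mu> x M l, OF mupos x0 xe])
    thus ?thesis using all x0 by metis
  qed
  have "largest_eigenvalue M = rayleigh M \<mu> v"
    unfolding largest_eigenvalue_def by (rule Max_eqI[OF fin le mem])
  thus ?thesis using v0 all ev by (intro exI[of _ v]) simp
qed

lemma quad_shift:
  fixes B :: "'n::finite \<Rightarrow> 'n \<Rightarrow> real"
  assumes row: "\<And>i. (\<Sum>j\<in>UNIV. B i j) = 0" and col: "\<And>j. (\<Sum>i\<in>UNIV. B i j) = 0"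
  shows "(\<Sum>i\<in>UNIV. \<Sum>j\<in>UNIV. B i j * (a * x i + c) * (a * x j + c))
       = a\<^sup>2 * (\<Sum>i\<in>UNIV. \<Sum>j\<in>UNIV. B i j * x i * x j)"
proof -
  have inner: "(\<Sum>j\<in>UNIV. B i j * y * (a * x j + c)) = y * a * (\<Sum>j\<in>UNIV. B i j * x j)" for i y
  proof -
    have "(\<Sum>j\<in>UNIV. B i j * y * (a * x j + c)) = y * a * (\<Sum>j\<in>UNIV. B i j * x j) + y * c * (\<Sum>j\<in>UNIV. B i j)"
      by (simp add: sum_distrib_left sum.distrib algebra_simps)
    thus ?thesis using row[of i] by simp
  qed
  have "(\<Sum>i\<in>UNIV. \<Sum>j\<in>UNIV. B i j * (a * x i + c) * (a * x j + c))
      = (\<Sum>i\<in>UNIV. (a * x i + c) * a * (\<Sum>j\<in>UNIV. B i j * x j))"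
    by (simp add: inner)
  also have "\<dots> = (\<Sum>i\<in>UNIV. \<Sum>j\<in>UNIV. B i j * x j * (a * x i + c) * a)"
    by (rule sum.cong[OF refl]) (simp add: sum_distrib_left sum_distrib_right mult_ac)
  also have "\<dots> = (\<Sum>j\<in>UNIV. \<Sum>i\<in>UNIV. B i j * x j * (a * x i + c) * a)"
    by (rule sum.swap)
  also have "\<dots> = (\<Sum>j\<in>UNIV. x j * a * (a * (\<Sum>i\<in>UNIV. B i j * x i) + c * (\<Sum>i\<in>UNIV. B i j)))"
    by (simp add: sum_distrib_left sum.distrib algebra_simps)
  also have "\<dots> = (\<Sum>j\<in>UNIV. x j * a * (a * (\<Sum>i\<in>UNIV. B i j * x i)))"
    using col by simp
  also have "\<dots> = a\<^sup>2 * (\<Sum>j\<in>UNIV. \<Sum>i\<in>UNIV. B i j * x i * x j)"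
    by (simp add: sum_distrib_left power2_eq_square algebra_simps)
  also have "\<dots> = a\<^sup>2 * (\<Sum>i\<in>UNIV. \<Sum>j\<in>UNIV. B i j * x i * x j)"
    by (subst sum.swap) simp
  finally show ?thesis .
qed

definition Bm :: "('n::finite \<Rightarrow> 'n \<Rightarrow> real) \<Rightarrow> 'n \<Rightarrow> 'n \<Rightarrow> real" where
  "Bm w i j = w i j - deg w i * deg w j / vol w UNIV"

lemma mm_entry:
  assumes "\<mu> i \<noteq> 0"
  shows "\<mu> i * mod_matrix w \<mu> $ i $ j = Bm w i j"
  using assms unfolding mod_matrix_def Bm_def by simp

lemma quad_mm:
  assumes mupos: "\<And>i. \<mu> i > 0"
  shows "inner_mu \<mu> x (mod_matrix w \<mu> *v x) = (\<Sum>i\<in>UNIV. \<Sum>j\<in>UNIV. Bm w i j * x$i * x$j)"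
  unfolding inner_mu_M
proof (intro sum.cong refl)
  fix i j
  have "\<mu> i \<noteq> 0" using mupos[of i] by simp
  thus "\<mu> i * mod_matrix w \<mu> $ i $ j * x $ i * x $ j = Bm w i j * x $ i * x $ j"
    using mm_entry[of \<mu> i w j] by simp
qed

lemma Bm_row:
  assumes "vol w UNIV \<noteq> 0"
  shows "(\<Sum>j\<in>UNIV. Bm w i j) = 0"
proof -
  have "(\<Sum>j\<in>UNIV. Bm w i j) = deg w i - deg w i * (\<Sum>j\<in>UNIV. deg w j) / vol w UNIV"
    unfolding Bm_def by (simp add: sum_subtractf deg_def sum_divide_distrib sum_distrib_left)
  also have "\<dots> = 0" using assms unfolding vol_def by simp
  finally show ?thesis .
qed

lemma Bm_sym:
  assumes sym: "\<And>i j. w i j = w j i"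
  shows "Bm w i j = Bm w j i"
  unfolding Bm_def using sym by (simp add: mult.commute)

lemma sum_ind_right: "(\<Sum>j\<in>UNIV. (f j::real) * (if j \<in> A then 1 else 0)) = sum f (A::'n::finite set)"
proof -
  have "(\<Sum>j\<in>UNIV. f j * (if j \<in> A then 1 else 0)) = (\<Sum>j\<in>UNIV. if j \<in> A then f j else 0)"
    by (rule sum.cong) auto
  also have "\<dots> = sum f A" by (simp add: sum.If_cases)
  finally show ?thesis .
qed

lemma sum_ind_left: "(\<Sum>i\<in>UNIV. (if i \<in> A then 1 else 0) * (f i::real)) = sum f (A::'n::finite set)"
  using sum_ind_right[of f A] by (simp add: mult.commute)

lemma Bm_indic:
  "(\<Sum>i\<in>UNIV. \<Sum>j\<in>UNIV. Bm w i j * (if i \<in> A then 1 else 0) * (if j \<in> A then 1 else 0))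
    = modularity w A"
proof -
  have "(\<Sum>i\<in>UNIV. \<Sum>j\<in>UNIV. Bm w i j * (if i \<in> A then 1 else 0) * (if j \<in> A then 1 else 0))
      = (\<Sum>i\<in>A. \<Sum>j\<in>A. Bm w i j)"
    by (simp add: sum_ind_right sum_ind_left sum_distrib_right[symmetric])
  also have "\<dots> = (\<Sum>i\<in>A. \<Sum>j\<in>A. w i j) - (\<Sum>i\<in>A. \<Sum>j\<in>A. deg w i * deg w j) / vol w UNIV"
    unfolding Bm_def by (simp add: sum_subtractf sum_divide_distrib)
  also have "(\<Sum>i\<in>A. \<Sum>j\<in>A. deg w i * deg w j) = (vol w A)\<^sup>2"
    unfolding vol_def by (simp add: power2_eq_square sum_product)
  finally show ?thesis unfolding modularity_def .
qed

theorem proposition2p2: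
  fixes w :: "'n::finite \<Rightarrow> 'n \<Rightarrow> real" and \<mu> :: "'n \<Rightarrow> real"
  assumes sym: "\<And>i j. w i j = w j i"
    and nonneg: "\<And>i j. w i j \<ge> 0"
    and volpos: "vol w UNIV > 0"
    and mupos: "\<And>i. \<mu> i > 0"
    and lampos: "largest_eigenvalue (mod_matrix w \<mu>) > 0"
  shows "(\<forall>A. rayleigh (mod_matrix w \<mu>) \<mu> (indic_vec A - indic_vec (UNIV - A))
                = 2 * modq w \<mu> A)
    \<and> (\<forall>A. A \<noteq> {} \<and> A \<noteq> UNIV \<longrightarrow>
          rayleigh (mod_matrix w \<mu>) \<mu> (indic_vec A - (meas \<mu> A / meas \<mu> UNIV) *\<^sub>R indic_vec UNIV)
            = modq_mu w \<mu> A)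
    \<and> (\<exists>x. x \<noteq> 0 \<and> inner_mu \<mu> x (indic_vec UNIV) = 0
          \<and> rayleigh (mod_matrix w \<mu>) \<mu> x = largest_eigenvalue (mod_matrix w \<mu>))
    \<and> (\<forall>x. x \<noteq> 0 \<and> inner_mu \<mu> x (indic_vec UNIV) = 0
          \<longrightarrow> rayleigh (mod_matrix w \<mu>) \<mu> x \<le> largest_eigenvalue (mod_matrix w \<mu>))
    \<and> (\<exists>x. x \<noteq> 0 \<and> rayleigh (mod_matrix w \<mu>) \<mu> x = largest_eigenvalue (mod_matrix w \<mu>))
    \<and> (\<forall>x. x \<noteq> 0 \<longrightarrow> rayleigh (mod_matrix w \<mu>) \<mu> x \<le> largest_eigenvalue (mod_matrix w \<mu>))"
proof -
  define M where "M = mod_matrix w \<mu>"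
  define L where "L = largest_eigenvalue M"
  have V0: "vol w UNIV \<noteq> 0" using volpos by simp
  have row: "\<And>i. (\<Sum>j\<in>UNIV. Bm w i j) = 0" using Bm_row[OF V0] by blast
  have col: "\<And>j. (\<Sum>i\<in>UNIV. Bm w i j) = 0" using Bm_row[OF V0] Bm_sym[of w, OF sym] by simp
  have sa: "\<And>i j. \<mu> i * M$i$j = \<mu> j * M$j$i"
  proof -
    fix i j
    have "\<mu> i \<noteq> 0" "\<mu> j \<noteq> 0" using mupos[of i] mupos[of j] by auto
    thus "\<mu> i * M$i$j = \<mu> j * M$j$i" unfolding M_def
      using mm_entry[of \<mu> i w j] mm_entry[of \<mu> j w i] Bm_sym[of w i j, OF sym] by simp
  qed
  have mV: "meas \<mu> UNIV > 0"
    unfolding meas_def using mupos by (intro sum_pos) auto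
  have quad: "\<And>x. inner_mu \<mu> x (M *v x) = (\<Sum>i\<in>UNIV. \<Sum>j\<in>UNIV. Bm w i j * x$i * x$j)"
    unfolding M_def using quad_mm[of \<mu>, OF mupos] by blast
  define ind :: "'n set \<Rightarrow> 'n \<Rightarrow> real" where "ind A i = (if i \<in> A then 1 else 0)" for A i
  have p1: "rayleigh M \<mu> (indic_vec A - indic_vec (UNIV - A)) = 2 * modq w \<mu> A" for A
  proof -
    define x where "x = indic_vec A - indic_vec (UNIV - A)"
    have xi: "x$i = 2 * ind A i + -1" for i
      unfolding x_def indic_vec_def ind_def by simp
    have "inner_mu \<mu> x (M *v x) = (\<Sum>i\<in>UNIV. \<Sum>j\<in>UNIV. Bm w i j * (2 * ind A i + -1) * (2 * ind A j + -1))"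
      unfolding quad xi ..
    also have "\<dots> = 2\<^sup>2 * (\<Sum>i\<in>UNIV. \<Sum>j\<in>UNIV. Bm w i j * ind A i * ind A j)"
      by (rule quad_shift[OF row col])
    also have "\<dots> = 4 * modularity w A"
      using Bm_indic[of w A] unfolding ind_def by simp
    finally have num: "inner_mu \<mu> x (M *v x) = 4 * modularity w A" .
    have den: "inner_mu \<mu> x x = meas \<mu> UNIV"
      unfolding inner_mu_def meas_def xi ind_def by (intro sum.cong) auto
    show ?thesis
      unfolding x_def[symmetric] rayleigh_def num den modq_def using mV by simp
  qed
  have p2: "rayleigh M \<mu> (indic_vec A - (meas \<mu> A / meas \<mu> UNIV) *\<^sub>R indic_vec UNIV) = modq_mu w \<mu> A"
    if "A \<noteq> {}" "A \<noteq> UNIV" for A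
  proof -
    define c where "c = meas \<mu> A / meas \<mu> UNIV"
    define x where "x = indic_vec A - c *\<^sub>R indic_vec UNIV"
    have xi: "x$i = 1 * ind A i + - c" for i
      unfolding x_def indic_vec_def ind_def by simp
    have "inner_mu \<mu> x (M *v x) = (\<Sum>i\<in>UNIV. \<Sum>j\<in>UNIV. Bm w i j * (1 * ind A i + - c) * (1 * ind A j + - c))"
      unfolding quad xi ..
    also have "\<dots> = 1\<^sup>2 * (\<Sum>i\<in>UNIV. \<Sum>j\<in>UNIV. Bm w i j * ind A i * ind A j)"
      by (rule quad_shift[OF row col])
    also have "\<dots> = modularity w A"
      using Bm_indic[of w A] unfolding ind_def by simp
    finally have num: "inner_mu \<mu> x (M *v x) = modularity w A" .
    have split: "meas \<mu> UNIV = meas \<mu> A + meas \<mu> (UNIV - A)"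
      unfolding meas_def using sum.subset_diff[of A UNIV \<mu>] by simp
    have "inner_mu \<mu> x x = (\<Sum>i\<in>UNIV. \<mu> i * (ind A i - c)\<^sup>2)"
      unfolding inner_mu_def xi by (simp add: power2_eq_square mult.assoc)
    also have "\<dots> = (\<Sum>i\<in>A. \<mu> i * (ind A i - c)\<^sup>2) + (\<Sum>i\<in>UNIV - A. \<mu> i * (ind A i - c)\<^sup>2)"
      using sum.subset_diff[of A UNIV "\<lambda>i. \<mu> i * (ind A i - c)\<^sup>2"] by simp
    also have "\<dots> = meas \<mu> A * (1 - c)\<^sup>2 + meas \<mu> (UNIV - A) * c\<^sup>2"
      unfolding meas_def ind_def by (simp add: sum_distrib_right)
    also have "\<dots> = meas \<mu> A * meas \<mu> (UNIV - A) / meas \<mu> UNIV"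
    proof -
      define a where "a = meas \<mu> A"
      define b where "b = meas \<mu> (UNIV - A)"
      have V: "meas \<mu> UNIV = a + b" using split unfolding a_def b_def .
      have Vp: "a + b > 0" using mV V by simp
      have e1: "1 - a/(a+b) = b/(a+b)" using Vp by (simp add: field_simps)
      have "a * (b/(a+b))\<^sup>2 + b * (a/(a+b))\<^sup>2 = (a * b * (a + b)) / (a+b)\<^sup>2"
        by (simp add: power_divide add_divide_distrib algebra_simps power2_eq_square)
      also have "\<dots> = a * b / (a + b)" using Vp by (simp add: power2_eq_square)
      finally have "a * (1 - a/(a+b))\<^sup>2 + b * (a/(a+b))\<^sup>2 = a * b / (a + b)" unfolding e1 .
      thus ?thesis unfolding c_def V a_def[symmetric] b_def[symmetric] .
    qed
    finally have den: "inner_mu \<mu> x x = meas \<mu> A * meas \<mu> (UNIV - A) / meas \<mu> UNIV" .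
    show ?thesis
      unfolding x_def[symmetric] c_def[symmetric] rayleigh_def num den modq_mu_def
      by simp
  qed
  obtain v where v0: "v \<noteq> 0" and all: "\<forall>x. x \<noteq> 0 \<longrightarrow> rayleigh M \<mu> x \<le> L"
    and ev: "M *v v = L *\<^sub>R v" and rv: "rayleigh M \<mu> v = L"
    using largest_eq[of \<mu> M, OF mupos sa] unfolding L_def by (elim exE conjE)
  have one: "M *v indic_vec UNIV = 0 *\<^sub>R indic_vec UNIV"
  proof -
    have "(M *v indic_vec UNIV)$i = 0" for i
    proof -
      have "\<mu> i \<noteq> 0" using mupos[of i] by simp
      hence "(M *v indic_vec UNIV)$i = (\<Sum>j\<in>UNIV. Bm w i j) / \<mu> i"
        unfolding M_def matrix_vector_mult_def indic_vec_def mod_matrix_def Bm_def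
        by (simp add: sum_divide_distrib)
      thus ?thesis using row by simp
    qed
    thus ?thesis by (simp add: vec_eq_iff)
  qed
  have orth: "inner_mu \<mu> v (indic_vec UNIV) = 0"
    using eig_orth[OF sa ev one] lampos unfolding L_def M_def by simp
  show ?thesis
    unfolding M_def[symmetric] L_def[symmetric]
  proof (intro conjI)
    show "\<forall>A. rayleigh M \<mu> (indic_vec A - indic_vec (UNIV - A)) = 2 * modq w \<mu> A"
      using p1 by (intro allI)
    show "\<forall>A. A \<noteq> {} \<and> A \<noteq> UNIV \<longrightarrow>
          rayleigh M \<mu> (indic_vec A - (meas \<mu> A / meas \<mu> UNIV) *\<^sub>R indic_vec UNIV) = modq_mu w \<mu> A"
      using p2 by (intro allI impI) (elim conjE)
    show "\<exists>x. x \<noteq> 0 \<and> inner_mu \<mu> x (indic_vec UNIV) = 0 \<and> rayleigh M \<mu> x = L"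
      using v0 orth rv by (intro exI[of _ v]) simp
    show "\<forall>x. x \<noteq> 0 \<and> inner_mu \<mu> x (indic_vec UNIV) = 0 \<longrightarrow> rayleigh M \<mu> x \<le> L"
      using all by simp
    show "\<exists>x. x \<noteq> 0 \<and> rayleigh M \<mu> x = L"
      using v0 rv by (intro exI[of _ v]) simp
    show "\<forall>x. x \<noteq> 0 \<longrightarrow> rayleigh M \<mu> x \<le> L" using all .
  qed
qed

end
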